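(* Let $M$ be a 4-dimensional chart domain with coordinates $(t,r,\theta,\phi)$, let $\Gamma$ be a spherically symmetric torsion-free affine connection on $M$ with coefficients given by functions $k_1,\dots,k_{12}$ of $(t,r)$ as in the context, and let $L=L(t,r,\dot t,\dot r,w)$ be an $SO(3)$-spatially spherically symmetric pseudo-Finsler function. Then the system of equations $\delta_\theta L=0=\delta_\phi L$, where $\delta_a=\partial_a-\Gamma^c{}_{ab}(x)\dot x^b\dot\partial_c$, is equivalent to $\delta_wL:=\left(wk_7\dot\partial_t+wk_{10}\dot\partial_r+(k_8\dot t+k_9\dot r)\partial_w\right)L=0$ together with $k_{11}=k_{12}=0$.
   Context: Induced coordinates $(t,r,\theta,\phi,\dot t,\dot r,\dot\theta,\dot\phi)$ on $TM$. A pseudo-Finsler function is a smooth $L$ on a conic subbundle $\mathcal{A}\subset TM\setminus\{0\}$ (open, projecting onto $M$, stable under positive rescaling of $\dot x$), positively 2-homogeneous in $\dot x$, with $g_{ab}=\tfrac12\dot\partial_a\dot\partial_bL$ non-degenerate. $SO(3)$-spatially spherically symmetric means $L$ depends only on $(t,r,\dot t,\dot r,w)$ with $w^2=\dot\theta^2+\sin^2\theta\,\dot\phi^2$; $\partial_w$ is defined by $w\partial_w=\dot\theta\dot\partial_\theta+\dot\phi\dot\partial_\phi$. The spherically symmetric torsion-free connection: the nonzero coefficients (symmetric in the lower indices) are $\Gamma^t_{tt}=k_1$, $\Gamma^t_{tr}=k_2$, $\Gamma^t_{rr}=k_3$, $\Gamma^r_{tt}=k_4$, $\Gamma^r_{rr}=k_5$,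 $\Gamma^r_{tr}=k_6$, $\Gamma^t_{\theta\theta}=k_7$, $\Gamma^t_{\phi\phi}=k_7\sin^2\theta$, $\Gamma^\theta_{\theta t}=\Gamma^\phi_{\phi t}=k_8$, $\Gamma^\theta_{\theta r}=\Gamma^\phi_{\phi r}=k_9$, $\Gamma^r_{\theta\theta}=k_{10}$, $\Gamma^r_{\phi\phi}=k_{10}\sin^2\theta$, $\Gamma^\phi_{t\theta}=k_{11}/\sin\theta$, $\Gamma^\theta_{\phi t}=-k_{11}\sin\theta$, $\Gamma^\phi_{r\theta}=k_{12}/\sin\theta$, $\Gamma^\theta_{r\phi}=-k_{12}\sin\theta$, $\Gamma^\phi_{\theta\phi}=\cot\theta$, $\Gamma^\theta_{\phi\phi}=-\sin\theta\cos\theta$, where $k_i=k_i(t,r)$. *)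

theory Defs
  imports "HOL-Analysis.Analysis"
begin

text \<open>Coordinates: index 0 = t, 1 = r, 2 = theta, 3 = phi (index type 4).
  A point of TM is a pair (x, v) of position x and velocity v (= xdot).\<close>

type_synonym tpt = "(real^4) \<times> (real^4)"

fun iter_dir :: "'a::real_normed_vector list \<Rightarrow> ('a \<Rightarrow> real) \<Rightarrow> 'a \<Rightarrow> real" where
  "iter_dir [] f = f"
| "iter_dir (d # ds) f = (\<lambda>p. deriv (\<lambda>s. iter_dir ds f (p + s *\<^sub>R d)) 0)"

definition smooth_on :: "'a::real_normed_vector set \<Rightarrow> ('a \<Rightarrow> real) \<Rightarrow> bool" where
  "smooth_on S f \<longleftrightarrow>
     (\<forall>ds. continuous_on S (iter_dir ds f) \<and>
        (\<forall>d. \<forall>p\<in>S. (\<lambda>s. iter_dir ds f (p + s *\<^sub>R d)) differentiable (at 0)))"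

definition dx :: "4 \<Rightarrow> (tpt \<Rightarrow> real) \<Rightarrow> tpt \<Rightarrow> real" where
  "dx a f p = deriv (\<lambda>s. f (fst p + s *\<^sub>R axis a 1, snd p)) 0"

definition dv :: "4 \<Rightarrow> (tpt \<Rightarrow> real) \<Rightarrow> tpt \<Rightarrow> real" where
  "dv a f p = deriv (\<lambda>s. f (fst p, snd p + s *\<^sub>R axis a 1)) 0"

definition gten :: "(tpt \<Rightarrow> real) \<Rightarrow> tpt \<Rightarrow> real^4^4" where
  "gten L p = (\<chi> a b. (1/2) * dv a (dv b L) p)"

definition conic_subbundle :: "(real^4) set \<Rightarrow> tpt set \<Rightarrow> bool" where
  "conic_subbundle M A \<longleftrightarrow>
     open A \<and> A \<subseteq> M \<times> (UNIV - {0}) \<and> fst ` A = M \<and>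
     (\<forall>x v. (x, v) \<in> A \<longrightarrow> (\<forall>c>0. (x, c *\<^sub>R v) \<in> A))"

definition pseudo_finsler :: "(real^4) set \<Rightarrow> tpt set \<Rightarrow> (tpt \<Rightarrow> real) \<Rightarrow> bool" where
  "pseudo_finsler M A L \<longleftrightarrow>
     conic_subbundle M A \<and> smooth_on A L \<and>
     (\<forall>x v. (x, v) \<in> A \<longrightarrow> (\<forall>c>0. L (x, c *\<^sub>R v) = c\<^sup>2 * L (x, v))) \<and>
     (\<forall>p\<in>A. det (gten L p) \<noteq> 0)"

definition wfun :: "tpt \<Rightarrow> real" where
  "wfun p = sqrt ((snd p $ 2)\<^sup>2 + (sin (fst p $ 2))\<^sup>2 * (snd p $ 3)\<^sup>2)"

definition sph_sym :: "tpt set \<Rightarrow> (tpt \<Rightarrow> real) \<Rightarrow> bool" where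
  "sph_sym A L \<longleftrightarrow>
     (\<exists>F :: real \<Rightarrow> real \<Rightarrow> real \<Rightarrow> real \<Rightarrow> real \<Rightarrow> real.
        \<forall>p\<in>A. L p = F (fst p $ 0) (fst p $ 1) (snd p $ 0) (snd p $ 1) (wfun p))"

text \<open>Spherically symmetric torsion-free connection coefficients Gamma^c_{ab};
  k i t r is the coefficient k_i(t,r), i = 1..12.\<close>

definition Gam :: "(nat \<Rightarrow> real \<Rightarrow> real \<Rightarrow> real) \<Rightarrow> real^4 \<Rightarrow> 4 \<Rightarrow> 4 \<Rightarrow> 4 \<Rightarrow> real" where
  "Gam k x c a b =
    (let t = x $ 0; r = x $ 1; th = x $ 2; is = (\<lambda>p q. {a, b} = {p, q}) in
     if c = 0 then
       (if is 0 0 then k 1 t r else if is 0 1 then k 2 t r else if is 1 1 then k 3 t r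
        else if is 2 2 then k 7 t r else if is 3 3 then k 7 t r * (sin th)\<^sup>2 else 0)
     else if c = 1 then
       (if is 0 0 then k 4 t r else if is 1 1 then k 5 t r else if is 0 1 then k 6 t r
        else if is 2 2 then k 10 t r else if is 3 3 then k 10 t r * (sin th)\<^sup>2 else 0)
     else if c = 2 then
       (if is 2 0 then k 8 t r else if is 2 1 then k 9 t r
        else if is 3 0 then - k 11 t r * sin th else if is 1 3 then - k 12 t r * sin th
        else if is 3 3 then - sin th * cos th else 0)
     else
       (if is 3 0 then k 8 t r else if is 3 1 then k 9 t r
        else if is 0 2 then k 11 t r / sin th else if is 1 2 then k 12 t r / sin th
        else if is 2 3 then cot th else 0))"

definition delta :: "(nat \<Rightarrow> real \<Rightarrow> real \<Rightarrow> real) \<Rightarrow> 4 \<Rightarrow> (tpt \<Rightarrow> real) \<Rightarrow> tpt \<Rightarrow> real" where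
  "delta k a L p = dx a L p - (\<Sum>b\<in>UNIV. \<Sum>c\<in>UNIV. Gam k (fst p) c a b * (snd p $ b) * dv c L p)"

text \<open>partial_w defined through w partial_w = thetadot dotpartial_theta + phidot dotpartial_phi.\<close>

definition dw :: "(tpt \<Rightarrow> real) \<Rightarrow> tpt \<Rightarrow> real" where
  "dw L p = ((snd p $ 2) * dv 2 L p + (snd p $ 3) * dv 3 L p) / wfun p"

definition delta_w :: "(nat \<Rightarrow> real \<Rightarrow> real \<Rightarrow> real) \<Rightarrow> (tpt \<Rightarrow> real) \<Rightarrow> tpt \<Rightarrow> real" where
  "delta_w k L p =
    (let t = fst p $ 0; r = fst p $ 1 in
     wfun p * k 7 t r * dv 0 L p + wfun p * k 10 t r * dv 1 L p
     + (k 8 t r * (snd p $ 0) + k 9 t r * (snd p $ 1)) * dw L p)"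

definition chart_domain :: "(real^4) set \<Rightarrow> bool" where
  "chart_domain M \<longleftrightarrow> open M \<and> (\<forall>x\<in>M. 0 < x $ 2 \<and> x $ 2 < pi)"

end

theory Submission
  imports Defs
begin

lemma ev_open:
  fixes g :: "real \<Rightarrow> 'a::topological_space"
  assumes "continuous_on UNIV g" "open A" "g y0 \<in> A"
  shows "eventually (\<lambda>y. g y \<in> A) (nhds y0)"
proof -
  have "open (g -` A)" using assms by (simp add: open_vimage)
  then show ?thesis unfolding eventually_nhds using assms(3) by blast
qed

lemma deriv_ev:
  fixes f h :: "real \<Rightarrow> real"
  assumes "(f has_real_derivative D) (at x)" "eventually (\<lambda>s. h s = f s) (nhds x)"
  shows "deriv h x = D"
proof -
  have "(h has_real_derivative D) (at x)"
    using assms(1) has_field_derivative_cong_ev[of x x UNIV h f D D] assms(2) by simp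
  then show ?thesis by (rule DERIV_imp_deriv)
qed

lemma deriv_even:
  fixes h :: "real \<Rightarrow> real"
  assumes "h differentiable (at 0)" "eventually (\<lambda>s. h (-s) = h s) (nhds 0)"
  shows "deriv h 0 = 0"
proof -
  obtain D where D: "(h has_real_derivative D) (at 0)" using assms(1) real_differentiable_def by blast
  have D': "(h has_real_derivative D) (at (-0))" using D by simp
  have m: "((\<lambda>s. -s) has_real_derivative -1) (at (0::real))" by (auto intro!: derivative_eq_intros)
  have "((\<lambda>s. h (-s)) has_real_derivative D * (-1)) (at 0)"
    using DERIV_chain2[OF D' m] .
  then have "(h has_real_derivative -D) (at 0)"
    using has_field_derivative_cong_ev[of 0 0 UNIV "\<lambda>s. h (-s)" h "-D" "-D"] assms(2) by simp
  then have "D = -D" using D DERIV_unique by blast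
  then show ?thesis using D DERIV_imp_deriv by auto
qed

lemma deriv_chain_ev:
  fixes f g h :: "real \<Rightarrow> real"
  assumes "(f has_real_derivative D) (at (g 0))" "(g has_real_derivative G) (at 0)"
    "eventually (\<lambda>s. h s = f (g s)) (nhds 0)"
  shows "deriv h 0 = D * G"
  using deriv_ev[OF DERIV_chain2[OF assms(1,2)] assms(3)] .

lemma wfun_eq: "wfun (x, v) = sqrt ((v $ 2)\<^sup>2 + (sin (x $ 2))\<^sup>2 * (v $ 3)\<^sup>2)"
  by (simp add: wfun_def)

lemma ev_A:
  fixes A :: "tpt set"
  assumes "open A" "(x, v) \<in> A"
  shows "eventually (\<lambda>s. (x + s *\<^sub>R a, v + s *\<^sub>R b) \<in> A) (nhds 0)"
proof -
  have c: "continuous_on UNIV (\<lambda>s::real. (x + s *\<^sub>R a, v + s *\<^sub>R b))"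
    by (intro continuous_on_Pair continuous_intros)
  show ?thesis using ev_open[OF c assms(1)] assms(2) by simp
qed

lemma sqrt_deriv:
  fixes q :: "real \<Rightarrow> real"
  assumes "(q has_real_derivative Q) (at 0)" "q 0 > 0"
  shows "((\<lambda>s. sqrt (q s)) has_real_derivative Q / (2 * sqrt (q 0))) (at 0)"
proof -
  have "(sqrt has_real_derivative inverse (sqrt (q 0)) / 2) (at (q 0))"
    using DERIV_real_sqrt assms(2) by blast
  from DERIV_chain2[OF this assms(1)] show ?thesis by (simp add: field_simps)
qed

lemma ax_comp:
  "(x + s *\<^sub>R axis (2::4) (1::real)) $ 0 = x $ 0"
  "(x + s *\<^sub>R axis (2::4) (1::real)) $ 1 = x $ 1"
  "(x + s *\<^sub>R axis (2::4) (1::real)) $ 2 = x $ 2 + s"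
  "(x + s *\<^sub>R axis (2::4) (1::real)) $ 3 = x $ 3"
  "(x + s *\<^sub>R axis (3::4) (1::real)) $ 0 = x $ 0"
  "(x + s *\<^sub>R axis (3::4) (1::real)) $ 1 = x $ 1"
  "(x + s *\<^sub>R axis (3::4) (1::real)) $ 2 = x $ 2"
  "(x + s *\<^sub>R axis (3::4) (1::real)) $ 3 = x $ 3 + s"
  by (simp_all add: axis_def)

lemma dx3_zero:
  fixes A :: "tpt set" and L :: "tpt \<Rightarrow> real"
  assumes openA: "open A"
    and LF: "\<And>q. q\<in>A \<Longrightarrow> L q = F (fst q $ 0) (fst q $ 1) (snd q $ 0) (snd q $ 1) (wfun q)"
    and pA: "(x, v) \<in> A"
  shows "dx 3 L (x, v) = 0"
proof -
  have e: "eventually (\<lambda>s. (x + s *\<^sub>R axis 3 1, v + s *\<^sub>R 0) \<in> A) (nhds 0)"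
    by (rule ev_A[OF openA pA])
  have "eventually (\<lambda>s. L (x + s *\<^sub>R axis 3 1, v) = L (x, v)) (nhds 0)"
    using e by eventually_elim (simp add: LF pA wfun_def axis_def)
  then have "deriv (\<lambda>s. L (x + s *\<^sub>R axis 3 1, v)) 0 = 0"
    using deriv_ev[of "\<lambda>_. L (x, v)" 0 0] by simp
  then show ?thesis by (simp add: dx_def)
qed

lemma w0_facts:
  fixes A :: "tpt set" and L :: "tpt \<Rightarrow> real"
  assumes openA: "open A"
    and LF: "\<And>q. q\<in>A \<Longrightarrow> L q = F (fst q $ 0) (fst q $ 1) (snd q $ 0) (snd q $ 1) (wfun q)"
    and diffL: "\<And>q d. q\<in>A \<Longrightarrow> (\<lambda>s. L (q + s *\<^sub>R d)) differentiable (at 0)"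
    and pA: "(x, v) \<in> A"
    and w0: "wfun (x, v) = 0"
    and sn: "sin (x $ 2) \<noteq> 0"
  shows "dv 2 L (x, v) = 0" "dv 3 L (x, v) = 0" "dx 2 L (x, v) = 0"
proof -
  have v2: "v $ 2 = 0" and v3: "(sin (x$2))\<^sup>2 * (v $ 3)\<^sup>2 = 0" using w0
    by (simp_all add: wfun_def add_nonneg_eq_0_iff)
  have pr: "\<And>s a b. (x, v) + s *\<^sub>R (a, b) = (x + s *\<^sub>R a, v + s *\<^sub>R b)" by simp
  show "dv 2 L (x, v) = 0"
  proof -
    have e1: "eventually (\<lambda>s. (x + s *\<^sub>R 0, v + s *\<^sub>R axis 2 1) \<in> A) (nhds 0)"
      by (rule ev_A[OF openA pA])
    have e2: "eventually (\<lambda>s. (x + s *\<^sub>R 0, v + s *\<^sub>R (- axis 2 1)) \<in> A) (nhds 0)"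
      by (rule ev_A[OF openA pA])
    have "eventually (\<lambda>s. L (x, v + (-s) *\<^sub>R axis 2 1) = L (x, v + s *\<^sub>R axis 2 1)) (nhds 0)"
      using e1 e2 by eventually_elim (simp add: LF wfun_def axis_def v2 v3)
    moreover have "(\<lambda>s. L (x, v + s *\<^sub>R axis 2 1)) differentiable (at 0)"
      using diffL[OF pA, of "(0, axis 2 1)"] by (simp add: pr)
    ultimately show ?thesis unfolding dv_def using deriv_even by simp
  qed
  show "dv 3 L (x, v) = 0"
  proof -
    have e1: "eventually (\<lambda>s. (x + s *\<^sub>R 0, v + s *\<^sub>R axis 3 1) \<in> A) (nhds 0)"
      by (rule ev_A[OF openA pA])
    have e2: "eventually (\<lambda>s. (x + s *\<^sub>R 0, v + s *\<^sub>R (- axis 3 1)) \<in> A) (nhds 0)"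
      by (rule ev_A[OF openA pA])
    have sv: "sin (x$2) = 0 \<or> v$3 = 0" using v3 by simp
    have "eventually (\<lambda>s. L (x, v + (-s) *\<^sub>R axis 3 1) = L (x, v + s *\<^sub>R axis 3 1)) (nhds 0)"
      using e1 e2 by eventually_elim (use sv in \<open>auto simp add: LF wfun_def axis_def v2\<close>)
    moreover have "(\<lambda>s. L (x, v + s *\<^sub>R axis 3 1)) differentiable (at 0)"
      using diffL[OF pA, of "(0, axis 3 1)"] by (simp add: pr)
    ultimately show ?thesis unfolding dv_def using deriv_even by simp
  qed
  have e: "eventually (\<lambda>s. (x + s *\<^sub>R axis 2 1, v + s *\<^sub>R 0) \<in> A) (nhds 0)"
    by (rule ev_A[OF openA pA])
  have "eventually (\<lambda>s. L (x + s *\<^sub>R axis 2 1, v) = L (x, v)) (nhds 0)"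
    using e by eventually_elim (use v3 sn in \<open>simp add: LF pA wfun_def axis_def v2\<close>)
  then have "deriv (\<lambda>s. L (x + s *\<^sub>R axis 2 1, v)) 0 = 0"
    using deriv_ev[of "\<lambda>_. L (x, v)" 0 0] by simp
  then show "dx 2 L (x, v) = 0" by (simp add: dx_def)
qed

lemma wpos_facts:
  fixes A :: "tpt set" and L :: "tpt \<Rightarrow> real"
  assumes openA: "open A"
    and LF: "\<And>q. q\<in>A \<Longrightarrow> L q = F (fst q $ 0) (fst q $ 1) (snd q $ 0) (snd q $ 1) (wfun q)"
    and diffL: "\<And>q d. q\<in>A \<Longrightarrow> (\<lambda>s. L (q + s *\<^sub>R d)) differentiable (at 0)"
    and pA: "(x, v) \<in> A"
    and wp: "wfun (x, v) > 0"
  shows "\<exists>D. dv 2 L (x, v) = D * v$2 / wfun (x, v) \<and>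
             dv 3 L (x, v) = D * (sin (x$2))\<^sup>2 * v$3 / wfun (x, v) \<and>
             dx 2 L (x, v) = D * sin (x$2) * cos (x$2) * (v$3)\<^sup>2 / wfun (x, v)"
proof -
  define w where "w = wfun (x, v)"
  define f where "f = F (x$0) (x$1) (v$0) (v$1)"
  define av :: "real^4" where "av = (\<chi> i. if i = 2 then v$2 else if i = 3 then v$3 else 0)"
  have av: "av$0 = 0" "av$1 = 0" "av$2 = v$2" "av$3 = v$3" by (simp_all add: av_def)
  have w0: "w > 0" using wp w_def by simp
  have wdef: "w = sqrt ((v$2)\<^sup>2 + (sin (x$2))\<^sup>2 * (v$3)\<^sup>2)" by (simp add: w_def wfun_def)
  have wsq: "w\<^sup>2 = (v$2)\<^sup>2 + (sin (x$2))\<^sup>2 * (v$3)\<^sup>2" unfolding wdef by simp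
  have pr: "\<And>s a b. (x, v) + s *\<^sub>R (a, b) = (x + s *\<^sub>R a, v + s *\<^sub>R b)" by simp
  obtain D0 where D0: "((\<lambda>s. L ((x, v) + s *\<^sub>R (0, av))) has_real_derivative D0) (at 0)"
    using diffL[OF pA] real_differentiable_def by blast
  have D0': "((\<lambda>s. L (x, v + s *\<^sub>R av)) has_real_derivative D0) (at ((w - w) / w))"
    using D0 by (simp add: pr)
  have lin: "((\<lambda>y. (y - w) / w) has_real_derivative 1 / w) (at w)"
    using w0 by (auto intro!: derivative_eq_intros)
  have ch: "((\<lambda>y. L (x, v + ((y - w) / w) *\<^sub>R av)) has_real_derivative D0 * (1 / w)) (at w)"
    using DERIV_chain2[OF D0' lin] .
  have c: "continuous_on UNIV (\<lambda>y::real. (x, v + ((y - w) / w) *\<^sub>R av))"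
    by (intro continuous_on_Pair continuous_intros) (use w0 in auto)
  have e1: "eventually (\<lambda>y. (x, v + ((y - w) / w) *\<^sub>R av) \<in> A) (nhds w)"
    using ev_open[OF c openA] pA by simp
  have e2: "eventually (\<lambda>y. y \<in> {0<..}) (nhds w)"
    using ev_open[of "\<lambda>y. y" "{0<..}" w] w0 by simp
  have "eventually (\<lambda>y. f y = L (x, v + ((y - w) / w) *\<^sub>R av)) (nhds w)"
    using e1 e2
  proof eventually_elim
    case (elim y)
    have "wfun (x, v + ((y - w) / w) *\<^sub>R av) = sqrt ((y / w)\<^sup>2 * w\<^sup>2)"
      unfolding wfun_def wsq using w0
      by (simp add: av field_simps power2_eq_square)
    also have "\<dots> = y" using elim w0 by (simp add: real_sqrt_mult)
    finally show ?case using elim by (simp add: LF f_def av)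
  qed
  then have fD: "(f has_real_derivative D0 / w) (at w)"
    using ch has_field_derivative_cong_ev[of w w UNIV f "\<lambda>y. L (x, v + ((y - w) / w) *\<^sub>R av)" "D0 / w" "D0 * (1 / w)"]
    by simp
  define D where "D = D0 / w"
  have La: "dv 2 L (x, v) = D * v$2 / w"
  proof -
    let ?g = "\<lambda>s. sqrt ((v$2 + s)\<^sup>2 + (sin (x$2))\<^sup>2 * (v$3)\<^sup>2)"
    have g0: "?g 0 = w" using wdef by simp
    have q: "((\<lambda>s. (v$2 + s)\<^sup>2 + (sin (x$2))\<^sup>2 * (v$3)\<^sup>2) has_real_derivative 2 * v$2) (at 0)"
      by (auto intro!: derivative_eq_intros)
    have gD: "(?g has_real_derivative v$2 / w) (at 0)"
      using sqrt_deriv[OF q] w0 wsq g0 by (simp add: wdef)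
    have fD': "(f has_real_derivative D) (at (?g 0))" using fD g0 D_def by simp
    have e: "eventually (\<lambda>s. (x + s *\<^sub>R 0, v + s *\<^sub>R axis 2 1) \<in> A) (nhds 0)"
      by (rule ev_A[OF openA pA])
    have "eventually (\<lambda>s. L (x, v + s *\<^sub>R axis 2 1) = f (?g s)) (nhds 0)"
      using e by eventually_elim (simp add: LF f_def wfun_def axis_def)
    from deriv_chain_ev[OF fD' gD this] show ?thesis by (simp add: dv_def)
  qed
  have Lb: "dv 3 L (x, v) = D * (sin (x$2))\<^sup>2 * v$3 / w"
  proof -
    let ?g = "\<lambda>s. sqrt ((v$2)\<^sup>2 + (sin (x$2))\<^sup>2 * (v$3 + s)\<^sup>2)"
    have g0: "?g 0 = w" using wdef by simp
    have q: "((\<lambda>s. (v$2)\<^sup>2 + (sin (x$2))\<^sup>2 * (v$3 + s)\<^sup>2) has_real_derivative (sin (x$2))\<^sup>2 * (2 * v$3)) (at 0)"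
      by (auto intro!: derivative_eq_intros)
    have gD: "(?g has_real_derivative (sin (x$2))\<^sup>2 * v$3 / w) (at 0)"
      using sqrt_deriv[OF q] w0 wsq g0 by (simp add: wdef)
    have fD': "(f has_real_derivative D) (at (?g 0))" using fD g0 D_def by simp
    have e: "eventually (\<lambda>s. (x + s *\<^sub>R 0, v + s *\<^sub>R axis 3 1) \<in> A) (nhds 0)"
      by (rule ev_A[OF openA pA])
    have "eventually (\<lambda>s. L (x, v + s *\<^sub>R axis 3 1) = f (?g s)) (nhds 0)"
      using e by eventually_elim (simp add: LF f_def wfun_def axis_def)
    from deriv_chain_ev[OF fD' gD this] show ?thesis by (simp add: dv_def)
  qed
  have Xt: "dx 2 L (x, v) = D * sin (x$2) * cos (x$2) * (v$3)\<^sup>2 / w"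
  proof -
    let ?g = "\<lambda>s. sqrt ((v$2)\<^sup>2 + (sin (x$2 + s))\<^sup>2 * (v$3)\<^sup>2)"
    have g0: "?g 0 = w" using wdef by simp
    have q: "((\<lambda>s. (v$2)\<^sup>2 + (sin (x$2 + s))\<^sup>2 * (v$3)\<^sup>2) has_real_derivative 2 * sin (x$2) * cos (x$2) * (v$3)\<^sup>2) (at 0)"
      by (auto intro!: derivative_eq_intros)
    have gD: "(?g has_real_derivative sin (x$2) * cos (x$2) * (v$3)\<^sup>2 / w) (at 0)"
      using sqrt_deriv[OF q] w0 wsq g0 by (simp add: wdef mult.assoc)
    have fD': "(f has_real_derivative D) (at (?g 0))" using fD g0 D_def by simp
    have e: "eventually (\<lambda>s. (x + s *\<^sub>R axis 2 1, v + s *\<^sub>R 0) \<in> A) (nhds 0)"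
      by (rule ev_A[OF openA pA])
    have "eventually (\<lambda>s. L (x + s *\<^sub>R axis 2 1, v) = f (?g s)) (nhds 0)"
      using e by eventually_elim (simp add: LF f_def wfun_def axis_def)
    from deriv_chain_ev[OF fD' gD this] show ?thesis by (simp add: dx_def)
  qed
  show ?thesis using La Lb Xt w_def by blast
qed

lemma four0: "(4::4) = 0" by simp
lemma U4: "(UNIV::4 set) = {0,1,2,3}" using exhaust_4 four0 by auto
lemma G020: "Gam k x 0 2 0 = 0" by (simp add: Gam_def Let_def doubleton_eq_iff)
lemma G021: "Gam k x 0 2 1 = 0" by (simp add: Gam_def Let_def doubleton_eq_iff)
lemma G022: "Gam k x 0 2 2 = k 7 (x $ 0) (x $ 1)" by (simp add: Gam_def Let_def doubleton_eq_iff)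
lemma G023: "Gam k x 0 2 3 = 0" by (simp add: Gam_def Let_def doubleton_eq_iff)
lemma G120: "Gam k x 1 2 0 = 0" by (simp add: Gam_def Let_def doubleton_eq_iff)
lemma G121: "Gam k x 1 2 1 = 0" by (simp add: Gam_def Let_def doubleton_eq_iff)
lemma G122: "Gam k x 1 2 2 = k 10 (x $ 0) (x $ 1)" by (simp add: Gam_def Let_def doubleton_eq_iff)
lemma G123: "Gam k x 1 2 3 = 0" by (simp add: Gam_def Let_def doubleton_eq_iff)
lemma G220: "Gam k x 2 2 0 = k 8 (x $ 0) (x $ 1)" by (simp add: Gam_def Let_def doubleton_eq_iff)
lemma G221: "Gam k x 2 2 1 = k 9 (x $ 0) (x $ 1)" by (simp add: Gam_def Let_def doubleton_eq_iff)
lemma G222: "Gam k x 2 2 2 = 0" by (simp add: Gam_def Let_def doubleton_eq_iff)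
lemma G223: "Gam k x 2 2 3 = 0" by (simp add: Gam_def Let_def doubleton_eq_iff)
lemma G320: "Gam k x 3 2 0 = k 11 (x $ 0) (x $ 1) / sin (x $ 2)" by (simp add: Gam_def Let_def doubleton_eq_iff)
lemma G321: "Gam k x 3 2 1 = k 12 (x $ 0) (x $ 1) / sin (x $ 2)" by (simp add: Gam_def Let_def doubleton_eq_iff)
lemma G322: "Gam k x 3 2 2 = 0" by (simp add: Gam_def Let_def doubleton_eq_iff)
lemma G323: "Gam k x 3 2 3 = cot (x $ 2)" by (simp add: Gam_def Let_def doubleton_eq_iff)
lemma G030: "Gam k x 0 3 0 = 0" by (simp add: Gam_def Let_def doubleton_eq_iff)
lemma G031: "Gam k x 0 3 1 = 0" by (simp add: Gam_def Let_def doubleton_eq_iff)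
lemma G032: "Gam k x 0 3 2 = 0" by (simp add: Gam_def Let_def doubleton_eq_iff)
lemma G033: "Gam k x 0 3 3 = k 7 (x $ 0) (x $ 1) * (sin (x $ 2))\<^sup>2" by (simp add: Gam_def Let_def doubleton_eq_iff)
lemma G130: "Gam k x 1 3 0 = 0" by (simp add: Gam_def Let_def doubleton_eq_iff)
lemma G131: "Gam k x 1 3 1 = 0" by (simp add: Gam_def Let_def doubleton_eq_iff)
lemma G132: "Gam k x 1 3 2 = 0" by (simp add: Gam_def Let_def doubleton_eq_iff)
lemma G133: "Gam k x 1 3 3 = k 10 (x $ 0) (x $ 1) * (sin (x $ 2))\<^sup>2" by (simp add: Gam_def Let_def doubleton_eq_iff)
lemma G230: "Gam k x 2 3 0 = - k 11 (x $ 0) (x $ 1) * sin (x $ 2)" by (simp add: Gam_def Let_def doubleton_eq_iff)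
lemma G231: "Gam k x 2 3 1 = - k 12 (x $ 0) (x $ 1) * sin (x $ 2)" by (simp add: Gam_def Let_def doubleton_eq_iff)
lemma G232: "Gam k x 2 3 2 = 0" by (simp add: Gam_def Let_def doubleton_eq_iff)
lemma G233: "Gam k x 2 3 3 = - sin (x $ 2) * cos (x $ 2)" by (simp add: Gam_def Let_def doubleton_eq_iff)
lemma G330: "Gam k x 3 3 0 = k 8 (x $ 0) (x $ 1)" by (simp add: Gam_def Let_def doubleton_eq_iff)
lemma G331: "Gam k x 3 3 1 = k 9 (x $ 0) (x $ 1)" by (simp add: Gam_def Let_def doubleton_eq_iff)
lemma G332: "Gam k x 3 3 2 = cot (x $ 2)" by (simp add: Gam_def Let_def doubleton_eq_iff)
lemma G333: "Gam k x 3 3 3 = 0" by (simp add: Gam_def Let_def doubleton_eq_iff)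
lemmas Gtab = G020 G021 G022 G023 G120 G121 G122 G123 G220 G221 G222 G223 G320 G321 G322 G323 G030 G031 G032 G033 G130 G131 G132 G133 G230 G231 G232 G233 G330 G331 G332 G333

lemma n4: "(0::4) \<noteq> 1" "(0::4) \<noteq> 2" "(0::4) \<noteq> 3" "(1::4) \<noteq> 2" "(1::4) \<noteq> 3" "(2::4) \<noteq> 3"
  by simp_all
lemma sum4: "(\<Sum>b\<in>(UNIV::4 set). f b) = f 0 + f 1 + f 2 + f 3"
  unfolding U4 using n4 by (simp add: add.assoc)
lemma delta2: "delta k 2 L p = dx 2 L p - (k 7 (fst p$0) (fst p$1) * snd p$2 * dv 0 L p
   + k 10 (fst p$0) (fst p$1) * snd p$2 * dv 1 L p
   + (k 8 (fst p$0) (fst p$1) * snd p$0 + k 9 (fst p$0) (fst p$1) * snd p$1) * dv 2 L p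
   + (k 11 (fst p$0) (fst p$1) / sin (fst p$2) * snd p$0 + k 12 (fst p$0) (fst p$1) / sin (fst p$2) * snd p$1
      + cot (fst p$2) * snd p$3) * dv 3 L p)"
  unfolding delta_def sum4 Gtab by (simp add: algebra_simps)
lemma delta3: "delta k 3 L p = dx 3 L p - (k 7 (fst p$0) (fst p$1) * (sin (fst p$2))^2 * snd p$3 * dv 0 L p
   + k 10 (fst p$0) (fst p$1) * (sin (fst p$2))^2 * snd p$3 * dv 1 L p
   + (- k 11 (fst p$0) (fst p$1) * sin (fst p$2) * snd p$0 - k 12 (fst p$0) (fst p$1) * sin (fst p$2) * snd p$1
      - sin (fst p$2) * cos (fst p$2) * snd p$3) * dv 2 L p
   + (k 8 (fst p$0) (fst p$1) * snd p$0 + k 9 (fst p$0) (fst p$1) * snd p$1 + cot (fst p$2) * snd p$2) * dv 3 L p)"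
  unfolding delta_def sum4 Gtab by (simp add: algebra_simps)

lemma alg2:
  fixes th w D a b t0 r0 Lt Lr k7 k8 k9 k10 k11 k12 :: real
  assumes "w > 0" "sin th > 0"
  shows "(D * sin th * cos th * b\<^sup>2 / w - (k7 * a * Lt + k10 * a * Lr + (k8 * t0 + k9 * r0) * (D * a / w)
     + (k11 / sin th * t0 + k12 / sin th * r0 + cos th / sin th * b) * (D * (sin th)\<^sup>2 * b / w))) * w
   = - (a * (w * k7 * Lt + w * k10 * Lr + (k8 * t0 + k9 * r0) * D) + (k11 * t0 + k12 * r0) * D * sin th * b)"
  using assms by (simp add: field_simps power2_eq_square)
lemma alg3:
  fixes th w D a b t0 r0 Lt Lr k7 k8 k9 k10 k11 k12 :: real
  assumes "w > 0" "sin th > 0"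
  shows "(0 - (k7 * (sin th)\<^sup>2 * b * Lt + k10 * (sin th)\<^sup>2 * b * Lr
     + (- k11 * sin th * t0 - k12 * sin th * r0 - sin th * cos th * b) * (D * a / w)
     + (k8 * t0 + k9 * r0 + cos th / sin th * a) * (D * (sin th)\<^sup>2 * b / w))) * w
   = - ((sin th)\<^sup>2 * b * (w * k7 * Lt + w * k10 * Lr + (k8 * t0 + k9 * r0) * D)) + (k11 * t0 + k12 * r0) * D * sin th * a"
  using assms by (simp add: field_simps power2_eq_square)

lemma key:
  fixes A :: "tpt set" and L :: "tpt \<Rightarrow> real"
  assumes openA: "open A"
    and LF: "\<And>q. q\<in>A \<Longrightarrow> L q = F (fst q $ 0) (fst q $ 1) (snd q $ 0) (snd q $ 1) (wfun q)"
    and diffL: "\<And>q d. q\<in>A \<Longrightarrow> (\<lambda>s. L (q + s *\<^sub>R d)) differentiable (at 0)"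
    and pA: "(x, v) \<in> A"
    and sn: "sin (x $ 2) > 0"
  shows "wfun (x, v) = 0 \<Longrightarrow> delta k 2 L (x, v) = 0 \<and> delta k 3 L (x, v) = 0 \<and> delta_w k L (x, v) = 0"
    and "wfun (x, v) \<noteq> 0 \<Longrightarrow> \<exists>D. dv 2 L (x, v) = D * v$2 / wfun (x, v) \<and>
       delta k 2 L (x, v) * wfun (x, v) = - (v$2 * delta_w k L (x, v)
          + (k 11 (x$0) (x$1) * v$0 + k 12 (x$0) (x$1) * v$1) * D * sin (x$2) * v$3) \<and>
       delta k 3 L (x, v) * wfun (x, v) = - ((sin (x$2))\<^sup>2 * v$3 * delta_w k L (x, v))
          + (k 11 (x$0) (x$1) * v$0 + k 12 (x$0) (x$1) * v$1) * D * sin (x$2) * v$2"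
proof -
  have X3: "dx 3 L (x, v) = 0" by (rule dx3_zero[of A L F, OF openA LF pA])
  {
    assume w0: "wfun (x, v) = 0"
    have v2: "v $ 2 = 0" and v3: "(sin (x$2))\<^sup>2 * (v $ 3)\<^sup>2 = 0" using w0
      by (simp_all add: wfun_def add_nonneg_eq_0_iff)
    have v3': "v $ 3 = 0" using v3 sn by simp
    note f = w0_facts[of A L F, OF openA LF diffL pA w0] 
    show "delta k 2 L (x, v) = 0 \<and> delta k 3 L (x, v) = 0 \<and> delta_w k L (x, v) = 0"
      using sn by (simp add: delta2 delta3 X3 f v2 v3' delta_w_def dw_def w0)
  }
  {
    assume wn: "wfun (x, v) \<noteq> 0"
    have "wfun (x, v) \<ge> 0" by (simp add: wfun_def)
    then have wp: "wfun (x, v) > 0" using wn by linarith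
    obtain D where D: "dv 2 L (x, v) = D * v$2 / wfun (x, v)"
         "dv 3 L (x, v) = D * (sin (x$2))\<^sup>2 * v$3 / wfun (x, v)"
         "dx 2 L (x, v) = D * sin (x$2) * cos (x$2) * (v$3)\<^sup>2 / wfun (x, v)"
      using wpos_facts[of A L F, OF openA LF diffL pA wp] by blast
    define w where "w = wfun (x, v)"
    have wsq: "w\<^sup>2 = (v$2)\<^sup>2 + (sin (x$2))\<^sup>2 * (v$3)\<^sup>2" unfolding w_def wfun_def by simp
    have w0: "w > 0" using wp w_def by simp
    have dwD: "dw L (x, v) = D"
    proof -
      have "dw L (x, v) = D * ((v$2)\<^sup>2 + (sin (x$2))\<^sup>2 * (v$3)\<^sup>2) / w\<^sup>2"
        unfolding dw_def D w_def[symmetric] using w0 by (simp add: field_simps power2_eq_square)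
      also have "\<dots> = D * w\<^sup>2 / w\<^sup>2" by (simp only: wsq)
      also have "\<dots> = D" using w0 by simp
      finally show ?thesis .
    qed
    have E: "delta_w k L (x, v) = w * k 7 (x$0) (x$1) * dv 0 L (x, v) + w * k 10 (x$0) (x$1) * dv 1 L (x, v)
       + (k 8 (x$0) (x$1) * v$0 + k 9 (x$0) (x$1) * v$1) * D"
      by (simp add: delta_w_def dwD w_def Let_def)
    show "\<exists>D. dv 2 L (x, v) = D * v$2 / wfun (x, v) \<and>
       delta k 2 L (x, v) * wfun (x, v) = - (v$2 * delta_w k L (x, v)
          + (k 11 (x$0) (x$1) * v$0 + k 12 (x$0) (x$1) * v$1) * D * sin (x$2) * v$3) \<and>
       delta k 3 L (x, v) * wfun (x, v) = - ((sin (x$2))\<^sup>2 * v$3 * delta_w k L (x, v))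
          + (k 11 (x$0) (x$1) * v$0 + k 12 (x$0) (x$1) * v$1) * D * sin (x$2) * v$2"
    proof (intro exI conjI)
      show "dv 2 L (x, v) = D * v$2 / wfun (x, v)" by (rule D(1))
      show "delta k 2 L (x, v) * wfun (x, v) = - (v$2 * delta_w k L (x, v)
          + (k 11 (x$0) (x$1) * v$0 + k 12 (x$0) (x$1) * v$1) * D * sin (x$2) * v$3)"
        unfolding E delta2 fst_conv snd_conv D X3 cot_def w_def[symmetric]
        by (rule alg2[OF w0 sn])
      show "delta k 3 L (x, v) * wfun (x, v) = - ((sin (x$2))\<^sup>2 * v$3 * delta_w k L (x, v))
          + (k 11 (x$0) (x$1) * v$0 + k 12 (x$0) (x$1) * v$1) * D * sin (x$2) * v$2"
        unfolding E delta3 fst_conv snd_conv D X3 cot_def w_def[symmetric]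
        by (rule alg3[OF w0 sn])
    qed
  }
qed

lemma ex_small:
  fixes A :: "tpt set"
  assumes "open A" "(x, u) \<in> A"
  shows "\<exists>s>0. (x, u + s *\<^sub>R b) \<in> A"
proof -
  have "eventually (\<lambda>s. (x + s *\<^sub>R 0, u + s *\<^sub>R b) \<in> A) (nhds 0)"
    by (rule ev_A[OF assms])
  then obtain d where "d > 0" "\<forall>y. dist y 0 \<le> d \<longrightarrow> (x + y *\<^sub>R 0, u + y *\<^sub>R b) \<in> A"
    unfolding eventually_nhds_metric_le by blast
  then show ?thesis by (intro exI[of _ d]) auto
qed

lemma solveE:
  fixes a b s E X w :: real
  assumes "a * E + X * s * b = 0" "s\<^sup>2 * b * E - X * s * a = 0" "w\<^sup>2 = a\<^sup>2 + s\<^sup>2 * b\<^sup>2" "w \<noteq> 0"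
  shows "E = 0"
proof -
  have "(a\<^sup>2 + s\<^sup>2 * b\<^sup>2) * E = a * (a * E + X * s * b) + b * (s\<^sup>2 * b * E - X * s * a)"
    by (simp add: power2_eq_square algebra_simps)
  also have "\<dots> = 0" using assms(1,2) by simp
  finally have "w\<^sup>2 * E = 0" using assms(3) by simp
  then show ?thesis using assms(4) by simp
qed

lemma kzero:
  fixes A :: "tpt set" and L :: "tpt \<Rightarrow> real"
  assumes openA: "open A"
    and LF: "\<And>q. q\<in>A \<Longrightarrow> L q = F (fst q $ 0) (fst q $ 1) (snd q $ 0) (snd q $ 1) (wfun q)"
    and diffL: "\<And>q d. q\<in>A \<Longrightarrow> (\<lambda>s. L (q + s *\<^sub>R d)) differentiable (at 0)"
    and sinpos: "\<And>x v. (x, v) \<in> A \<Longrightarrow> sin (x $ 2) > 0"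
    and H: "\<forall>p\<in>A. delta k 2 L p = 0 \<and> delta k 3 L p = 0"
    and dt: "\<forall>p\<in>A. det (gten L p) \<noteq> 0"
    and x0: "(x, v0) \<in> A"
  shows "k 11 (x$0) (x$1) = 0 \<and> k 12 (x$0) (x$1) = 0"
proof (rule ccontr)
  assume nz: "\<not> (k 11 (x$0) (x$1) = 0 \<and> k 12 (x$0) (x$1) = 0)"
  define c1 where "c1 = k 11 (x$0) (x$1)"
  define c2 where "c2 = k 12 (x$0) (x$1)"
  define K where "K = (\<lambda>u::real^4. c1 * u$0 + c2 * u$1)"
  have cpos: "c1\<^sup>2 + c2\<^sup>2 > 0" using nz c1_def c2_def sum_power2_gt_zero_iff by blast
  have sn: "sin (x$2) > 0" using sinpos x0 by blast
  obtain v1 where v1: "(x, v1) \<in> A" "K v1 \<noteq> 0"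
  proof (cases "K v0 = 0")
    case True
    define dK :: "real^4" where "dK = (\<chi> i. if i = 0 then c1 else if i = 1 then c2 else 0)"
    obtain s where s: "s > 0" "(x, v0 + s *\<^sub>R dK) \<in> A" using ex_small[OF openA x0] by blast
    have "K (v0 + s *\<^sub>R dK) = K v0 + s * (c1\<^sup>2 + c2\<^sup>2)"
      by (simp add: K_def dK_def algebra_simps power2_eq_square)
    moreover have "s * (c1\<^sup>2 + c2\<^sup>2) > 0" using s(1) cpos by simp
    ultimately have "K (v0 + s *\<^sub>R dK) > 0" using True by linarith
    then have "K (v0 + s *\<^sub>R dK) \<noteq> 0" by simp
    then show ?thesis using that s by blast
  next
    case False
    then show ?thesis using that x0 by blast
  qed
  obtain v2 where v2: "(x, v2) \<in> A" "K v2 \<noteq> 0" "wfun (x, v2) \<noteq> 0"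
  proof (cases "wfun (x, v1) = 0")
    case True
    then have z: "v1 $ 2 = 0" by (simp add: wfun_def add_nonneg_eq_0_iff)
    obtain s where s: "s > 0" "(x, v1 + s *\<^sub>R axis 2 1) \<in> A" using ex_small[OF openA v1(1)] by blast
    have "K (v1 + s *\<^sub>R axis 2 1) = K v1" by (simp add: K_def axis_def)
    moreover have "wfun (x, v1 + s *\<^sub>R axis 2 1) \<noteq> 0"
    proof -
      have "s\<^sup>2 + (sin (x $ 2))\<^sup>2 * (v1 $ 3)\<^sup>2 > 0" using s(1) by (simp add: add_pos_nonneg)
      then show ?thesis by (simp add: wfun_def axis_def z)
    qed
    ultimately show ?thesis using that s v1 by auto
  next
    case False
    then show ?thesis using that v1 by blast
  qed
  have Lz: "dv 2 L (x, u) = 0" if u: "(x, u) \<in> A" "K u \<noteq> 0" "wfun (x, u) \<noteq> 0" for u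
  proof -
    obtain D where D: "dv 2 L (x, u) = D * u$2 / wfun (x, u)"
      "delta k 2 L (x, u) * wfun (x, u) = - (u$2 * delta_w k L (x, u)
          + (k 11 (x$0) (x$1) * u$0 + k 12 (x$0) (x$1) * u$1) * D * sin (x$2) * u$3)"
      "delta k 3 L (x, u) * wfun (x, u) = - ((sin (x$2))\<^sup>2 * u$3 * delta_w k L (x, u))
          + (k 11 (x$0) (x$1) * u$0 + k 12 (x$0) (x$1) * u$1) * D * sin (x$2) * u$2"
      using key(2)[of A L F, OF openA LF diffL u(1) sn u(3)] by blast
    have h2: "delta k 2 L (x, u) = 0" "delta k 3 L (x, u) = 0" using H u(1) by auto
    have e1: "u$2 * delta_w k L (x, u) + (K u * D) * sin (x$2) * u$3 = 0"
      using D(2) h2 by (simp add: K_def c1_def c2_def)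
    have e2: "(sin (x$2))\<^sup>2 * u$3 * delta_w k L (x, u) - (K u * D) * sin (x$2) * u$2 = 0"
      using D(3) h2 by (simp add: K_def c1_def c2_def)
    have wsq: "(wfun (x, u))\<^sup>2 = (u$2)\<^sup>2 + (sin (x$2))\<^sup>2 * (u$3)\<^sup>2" by (simp add: wfun_def)
    have E0: "delta_w k L (x, u) = 0" by (rule solveE[OF e1 e2 wsq u(3)])
    have "K u * D * sin (x$2) * u$2 = 0" using e2 E0 by simp
    then have "D * u$2 = 0" using u(2) sn by simp
    then show ?thesis using D(1) by simp
  qed
  have dd: "dv b (dv 2 L) (x, v2) = 0" for b
  proof -
    have ea: "eventually (\<lambda>s. (x + s *\<^sub>R 0, v2 + s *\<^sub>R axis b 1) \<in> A) (nhds 0)"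
      by (rule ev_A[OF openA v2(1)])
    have Ke: "K (v2 + s *\<^sub>R axis b 1) = K v2 + s * K (axis b 1)" for s
      by (simp add: K_def algebra_simps)
    have c1: "continuous_on UNIV (\<lambda>s. K (v2 + s *\<^sub>R axis b 1))"
      unfolding Ke by (intro continuous_intros)
    have eK: "eventually (\<lambda>s. K (v2 + s *\<^sub>R axis b 1) \<in> -{0}) (nhds 0)"
      using ev_open[OF c1, of "-{0}" 0] v2(2) by auto
    have c2: "continuous_on UNIV (\<lambda>s. wfun (x, v2 + s *\<^sub>R axis b 1))"
      unfolding wfun_def by (simp, intro continuous_intros)
    have eW: "eventually (\<lambda>s. wfun (x, v2 + s *\<^sub>R axis b 1) \<in> -{0}) (nhds 0)"
      using ev_open[OF c2, of "-{0}" 0] v2(3) by auto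
    have "eventually (\<lambda>s. dv 2 L (x, v2 + s *\<^sub>R axis b 1) = 0) (nhds 0)"
      using ea eK eW by eventually_elim (rule Lz; simp)
    then have "deriv (\<lambda>s. dv 2 L (x, v2 + s *\<^sub>R axis b 1)) 0 = 0"
      using deriv_ev[of "\<lambda>_. 0" 0 0] by simp
    then show ?thesis by (simp add: dv_def)
  qed
  have "column 2 (gten L (x, v2)) = 0"
    by (simp add: column_def gten_def vec_eq_iff dd)
  then have "det (gten L (x, v2)) = 0" by (rule det_zero_column(1))
  then show False using dt v2(1) by blast
qed

theorem lemma1:
  fixes M :: "(real^4) set" and A :: "tpt set" and L :: "tpt \<Rightarrow> real"
    and k :: "nat \<Rightarrow> real \<Rightarrow> real \<Rightarrow> real"
  assumes "chart_domain M"
    and "pseudo_finsler M A L"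
    and "sph_sym A L"
  shows "(\<forall>p\<in>A. delta k 2 L p = 0 \<and> delta k 3 L p = 0) \<longleftrightarrow>
         ((\<forall>p\<in>A. delta_w k L p = 0) \<and>
          (\<forall>x\<in>M. k 11 (x $ 0) (x $ 1) = 0 \<and> k 12 (x $ 0) (x $ 1) = 0))"
proof -
  have cs: "conic_subbundle M A" and sm: "smooth_on A L" and dt: "\<forall>p\<in>A. det (gten L p) \<noteq> 0"
    using assms(2) by (simp_all add: pseudo_finsler_def)
  have openA: "open A" and sub: "A \<subseteq> M \<times> (UNIV - {0})" and fA: "fst ` A = M"
    using cs by (simp_all add: conic_subbundle_def)
  obtain F where F: "\<forall>p\<in>A. L p = F (fst p $ 0) (fst p $ 1) (snd p $ 0) (snd p $ 1) (wfun p)"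
    using assms(3) unfolding sph_sym_def by blast
  have LF: "\<And>q. q \<in> A \<Longrightarrow> L q = F (fst q $ 0) (fst q $ 1) (snd q $ 0) (snd q $ 1) (wfun q)"
    using F by blast
  have diffL: "\<And>q d. q \<in> A \<Longrightarrow> (\<lambda>s. L (q + s *\<^sub>R d)) differentiable (at 0)"
  proof -
    fix q d assume "q \<in> A"
    then show "(\<lambda>s. L (q + s *\<^sub>R d)) differentiable (at 0)"
      using sm unfolding smooth_on_def by (metis iter_dir.simps(1))
  qed
  have xM: "x \<in> M" if "(x, v) \<in> A" for x v using sub that by auto
  have sinpos: "\<And>x v. (x, v) \<in> A \<Longrightarrow> sin (x $ 2) > 0"
  proof -
    fix x v assume "(x, v) \<in> A"
    then have "x \<in> M" by (rule xM)
    then have "0 < x $ 2" "x $ 2 < pi" using assms(1) by (auto simp: chart_domain_def)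
    then show "sin (x $ 2) > 0" by (rule sin_gt_zero)
  qed
  show ?thesis
  proof
    assume H: "\<forall>p\<in>A. delta k 2 L p = 0 \<and> delta k 3 L p = 0"
    show "(\<forall>p\<in>A. delta_w k L p = 0) \<and>
          (\<forall>x\<in>M. k 11 (x $ 0) (x $ 1) = 0 \<and> k 12 (x $ 0) (x $ 1) = 0)"
    proof (rule conjI; rule ballI)
      fix p assume pA: "p \<in> A"
      obtain x v where p: "p = (x, v)" by (cases p)
      have xvA: "(x, v) \<in> A" using pA p by simp
      have sn: "sin (x $ 2) > 0" using sinpos xvA by blast
      show "delta_w k L p = 0"
      proof (cases "wfun (x, v) = 0")
        case True
        then show ?thesis using key(1)[of A L F, OF openA LF diffL xvA sn] p by blast
      next
        case False
        obtain D where D: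
          "delta k 2 L (x, v) * wfun (x, v) = - (v$2 * delta_w k L (x, v)
              + (k 11 (x$0) (x$1) * v$0 + k 12 (x$0) (x$1) * v$1) * D * sin (x$2) * v$3)"
          "delta k 3 L (x, v) * wfun (x, v) = - ((sin (x$2))\<^sup>2 * v$3 * delta_w k L (x, v))
              + (k 11 (x$0) (x$1) * v$0 + k 12 (x$0) (x$1) * v$1) * D * sin (x$2) * v$2"
          using key(2)[of A L F, OF openA LF diffL xvA sn False] by blast
        have h2: "delta k 2 L (x, v) = 0" "delta k 3 L (x, v) = 0" using H xvA by auto
        have e1: "v$2 * delta_w k L (x, v) + ((k 11 (x$0) (x$1) * v$0 + k 12 (x$0) (x$1) * v$1) * D) * sin (x$2) * v$3 = 0"
          using D(1) h2 by simp
        have e2: "(sin (x$2))\<^sup>2 * v$3 * delta_w k L (x, v) - ((k 11 (x$0) (x$1) * v$0 + k 12 (x$0) (x$1) * v$1) * D) * sin (x$2) * v$2 = 0"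
          using D(2) h2 by simp
        have wsq: "(wfun (x, v))\<^sup>2 = (v$2)\<^sup>2 + (sin (x$2))\<^sup>2 * (v$3)\<^sup>2" by (simp add: wfun_def)
        show ?thesis using solveE[OF e1 e2 wsq False] p by simp
      qed
    next
      fix x assume "x \<in> M"
      then obtain v0 where x0: "(x, v0) \<in> A" using fA by force
      have kk: "\<lbrakk>\<And>q. q \<in> A \<Longrightarrow> L q = F (fst q $ 0) (fst q $ 1) (snd q $ 0) (snd q $ 1) (wfun q);
              \<And>q d. q \<in> A \<Longrightarrow> (\<lambda>s. L (q + s *\<^sub>R d)) differentiable (at 0);
              \<And>x v. (x, v) \<in> A \<Longrightarrow> sin (x $ 2) > 0\<rbrakk> \<Longrightarrow>
              k 11 (x $ 0) (x $ 1) = 0 \<and> k 12 (x $ 0) (x $ 1) = 0"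
        by (rule kzero[where F=F and k=k and x=x and A=A and L=L, OF openA _ _ _ H dt x0])
      show "k 11 (x $ 0) (x $ 1) = 0 \<and> k 12 (x $ 0) (x $ 1) = 0"
        by (rule kk, rule LF, assumption, rule diffL, assumption, rule sinpos, assumption)
    qed
  next
    assume H: "(\<forall>p\<in>A. delta_w k L p = 0) \<and>
          (\<forall>x\<in>M. k 11 (x $ 0) (x $ 1) = 0 \<and> k 12 (x $ 0) (x $ 1) = 0)"
    show "\<forall>p\<in>A. delta k 2 L p = 0 \<and> delta k 3 L p = 0"
    proof
      fix p assume pA: "p \<in> A"
      obtain x v where p: "p = (x, v)" by (cases p)
      have xvA: "(x, v) \<in> A" using pA p by simp
      have sn: "sin (x $ 2) > 0" using sinpos xvA by blast
      have kz: "k 11 (x $ 0) (x $ 1) = 0" "k 12 (x $ 0) (x $ 1) = 0" using H xM[OF xvA] by auto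
      have Ez: "delta_w k L (x, v) = 0" using H xvA by blast
      show "delta k 2 L p = 0 \<and> delta k 3 L p = 0"
      proof (cases "wfun (x, v) = 0")
        case True
        then show ?thesis using key(1)[of A L F, OF openA LF diffL xvA sn] p by blast
      next
        case False
        obtain D where D:
          "delta k 2 L (x, v) * wfun (x, v) = - (v$2 * delta_w k L (x, v)
              + (k 11 (x$0) (x$1) * v$0 + k 12 (x$0) (x$1) * v$1) * D * sin (x$2) * v$3)"
          "delta k 3 L (x, v) * wfun (x, v) = - ((sin (x$2))\<^sup>2 * v$3 * delta_w k L (x, v))
              + (k 11 (x$0) (x$1) * v$0 + k 12 (x$0) (x$1) * v$1) * D * sin (x$2) * v$2"
          using key(2)[of A L F, OF openA LF diffL xvA sn False] by blast
        have "delta k 2 L (x, v) * wfun (x, v) = 0" "delta k 3 L (x, v) * wfun (x, v) = 0"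
          using D kz Ez by simp_all
        then show ?thesis using False p by simp
      qed
    qed
  qed
qed

end
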